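(* Let $X$ be a uniform space equipped with a uniformly continuous and expansive action of a group $\Gamma$, and let $f \colon X \to X$ be a uniformly continuous and $\Gamma$-equivariant map. Let $Y$ be a subset of $X$ such that $Y$ and $f(Y)$ are both closed in $X$ and the restriction of $f$ to $Y$ is a uniform embedding. Suppose that there exists a net $(Z_i)_{i \in I}$ of $\Gamma$-invariant subsets of $X$ such that, for all $i \in I$, $f(Z_i) \subset Z_i$ and the restriction map $f\vert_{Z_i} \colon Z_i \to Z_i$ is surjunctive, and such that $(Z_i)$ converges to $Y$ in the Hausdorff-Bourbaki topology. Then $Y$ is $\Gamma$-invariant and $f(Y) = Y$.
   Context: A map $g \colon S \to S$ is surjunctive if it is surjective or not injective. For $V \subset X \times X$ and $A \subset X$, $V[A] = \{x \in X : (x,a) \in V \text{ for some } a \in A\}$. An action of $\Gamma$ on $X$ is uniformly continuous if each map $x \mapsto \gamma x$ is uniformly continuous; it is expansive if there is an entourage $W_0$ of $X$ such that for any two distinct $x,y \in X$ there is $\gamma \in \Gamma$ with $(\gamma x,\gamma y) \notin W_0$. A uniform embedding is an injective map inducing a uniform isomorphism onto its image. The Hausdorff-Bourbaki uniform structure on the set $\mathcal{P}(X)$ of all subsets of $X$ has as a base the sets $\widehat{V} = \{(A,B) : B \subset V[A] \text{ and } A \subset V[B]\}$, $V$ an entourage of $X$; the Hausdorff-Bourbaki topology is its associated topology. *)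

theory Defs
  imports "HOL-Analysis.Analysis" "HOL-Algebra.Group"
begin

definition entourage :: "('a::uniform_space \<times> 'a) set \<Rightarrow> bool" where
  "entourage V \<longleftrightarrow> eventually (\<lambda>p. p \<in> V) uniformity"

definition rel_image :: "('a \<times> 'a) set \<Rightarrow> 'a set \<Rightarrow> 'a set" where
  "rel_image V A = {x. \<exists>a\<in>A. (x, a) \<in> V}"

definition hb_entourage :: "('a \<times> 'a) set \<Rightarrow> ('a set \<times> 'a set) set" where
  "hb_entourage V = {(A, B). B \<subseteq> rel_image V A \<and> A \<subseteq> rel_image V B}"

definition surjunctive :: "('a \<Rightarrow> 'a) \<Rightarrow> 'a set \<Rightarrow> bool" where
  "surjunctive g S \<longleftrightarrow> g ` S = S \<or> \<not> inj_on g S"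

definition group_action :: "('g, 'b) monoid_scheme \<Rightarrow> ('g \<Rightarrow> 'a \<Rightarrow> 'a) \<Rightarrow> bool" where
  "group_action G act \<longleftrightarrow> group G \<and> (\<forall>x. act \<one>\<^bsub>G\<^esub> x = x) \<and>
     (\<forall>g\<in>carrier G. \<forall>h\<in>carrier G. \<forall>x. act (g \<otimes>\<^bsub>G\<^esub> h) x = act g (act h x))"

definition expansive_action :: "('g, 'b) monoid_scheme \<Rightarrow> ('g \<Rightarrow> 'a::uniform_space \<Rightarrow> 'a) \<Rightarrow> bool" where
  "expansive_action G act \<longleftrightarrow> (\<exists>W0. entourage W0 \<and>
     (\<forall>x y. x \<noteq> y \<longrightarrow> (\<exists>g\<in>carrier G. (act g x, act g y) \<notin> W0)))"

definition invariant_set :: "('g, 'b) monoid_scheme \<Rightarrow> ('g \<Rightarrow> 'a \<Rightarrow> 'a) \<Rightarrow> 'a set \<Rightarrow> bool" where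
  "invariant_set G act Z \<longleftrightarrow> (\<forall>g\<in>carrier G. \<forall>z\<in>Z. act g z \<in> Z)"

definition uniform_embedding_on :: "'a::uniform_space set \<Rightarrow> ('a \<Rightarrow> 'b::uniform_space) \<Rightarrow> bool" where
  "uniform_embedding_on Y f \<longleftrightarrow> inj_on f Y \<and> uniformly_continuous_on Y f \<and>
     uniformly_continuous_on (f ` Y) (inv_into Y f)"

definition directed_set :: "'i set \<Rightarrow> ('i \<Rightarrow> 'i \<Rightarrow> bool) \<Rightarrow> bool" where
  "directed_set I leq \<longleftrightarrow> I \<noteq> {} \<and> (\<forall>i\<in>I. leq i i) \<and>
     (\<forall>i\<in>I. \<forall>j\<in>I. \<forall>k\<in>I. leq i j \<longrightarrow> leq j k \<longrightarrow> leq i k) \<and>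
     (\<forall>i\<in>I. \<forall>j\<in>I. \<exists>k\<in>I. leq i k \<and> leq j k)"

definition hb_converges :: "'i set \<Rightarrow> ('i \<Rightarrow> 'i \<Rightarrow> bool) \<Rightarrow> ('i \<Rightarrow> 'a::uniform_space set) \<Rightarrow> 'a set \<Rightarrow> bool" where
  "hb_converges I leq Z Y \<longleftrightarrow> (\<forall>V. entourage V \<longrightarrow>
     (\<exists>i0\<in>I. \<forall>i\<in>I. leq i0 i \<longrightarrow> (Y, Z i) \<in> hb_entourage V))"

end

theory Submission imports Defs begin

lemma ent_int: "entourage U \<Longrightarrow> entourage V \<Longrightarrow> entourage (U \<inter> V)"
  unfolding entourage_def by (auto elim: eventually_elim2)

lemma ent_sym: "entourage V \<Longrightarrow> entourage (converse V)"
  unfolding entourage_def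
  by (drule uniformity_sym) (auto elim!: eventually_mono)

lemma ent_trans: assumes "entourage V"
  obtains D where "entourage D" "\<And>x y z. (x,y)\<in>D \<Longrightarrow> (y,z)\<in>D \<Longrightarrow> (x,z)\<in>V"
proof -
  from uniformity_trans[OF assms[unfolded entourage_def]] obtain D where
    ev: "eventually D uniformity" and tr: "\<forall>x y z. D (x, y) \<longrightarrow> D (y, z) \<longrightarrow> (x, z) \<in> V" by blast
  show ?thesis
  proof (rule that[of "{p. D p}"])
    show "entourage {p. D p}" using ev by (simp add: entourage_def)
    fix x y z assume "(x,y)\<in>{p. D p}" "(y,z)\<in>{p. D p}"
    then show "(x,z)\<in>V" using tr by simp
  qed
qed

lemma ent_uc: assumes "uniformly_continuous_on S f" "entourage V"
  obtains U where "entourage U" "\<And>x y. x\<in>S \<Longrightarrow> y\<in>S \<Longrightarrow> (x,y)\<in>U \<Longrightarrow> (f x, f y)\<in>V"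
proof -
  have "eventually (\<lambda>(x, y). x \<in> S \<longrightarrow> y \<in> S \<longrightarrow> (f x, f y) \<in> V) uniformity"
    using uniformly_continuous_onD[OF assms(1), of "\<lambda>p. p \<in> V"] assms(2) by (simp add: entourage_def)
  then have ev: "eventually (\<lambda>p. p \<in> {p. fst p \<in> S \<longrightarrow> snd p \<in> S \<longrightarrow> (f (fst p), f (snd p)) \<in> V}) uniformity"
    by (simp add: case_prod_unfold)
  show ?thesis
  proof (rule that[of "{p. fst p \<in> S \<longrightarrow> snd p \<in> S \<longrightarrow> (f (fst p), f (snd p)) \<in> V}"])
    show "entourage {p. fst p \<in> S \<longrightarrow> snd p \<in> S \<longrightarrow> (f (fst p), f (snd p)) \<in> V}"
      using ev by (simp only: entourage_def)
    fix x y assume "x \<in> S" "y \<in> S" "(x,y) \<in> {p. fst p \<in> S \<longrightarrow> snd p \<in> S \<longrightarrow> (f (fst p), f (snd p)) \<in> V}"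
    then show "(f x, f y) \<in> V" by simp
  qed
qed

lemma ent_ucU: assumes "uniformly_continuous_on UNIV f" "entourage V"
  obtains U where "entourage U" "\<And>x y. (x,y)\<in>U \<Longrightarrow> (f x, f y)\<in>V"
proof -
  obtain U where U: "entourage U" "\<And>x y. x\<in>UNIV \<Longrightarrow> y\<in>UNIV \<Longrightarrow> (x,y)\<in>U \<Longrightarrow> (f x, f y)\<in>V"
    using ent_uc[OF assms] by blast
  show ?thesis
  proof (rule that[of U])
    show "entourage U" by (rule U(1))
    fix x y assume "(x,y) \<in> U" then show "(f x, f y) \<in> V" using U(2) by simp
  qed
qed

lemma ent_closed: assumes "closed S" "\<And>W. entourage W \<Longrightarrow> \<exists>y\<in>S. (x,y)\<in>W"
  shows "x \<in> S"
proof (rule ccontr)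
  assume "x \<notin> S"
  have "open (- S)" using assms(1) by auto
  then have "eventually (\<lambda>(x', y). x' = x \<longrightarrow> y \<in> - S) uniformity"
    using \<open>x \<notin> S\<close> by (simp add: open_uniformity)
  then have "entourage {p. case p of (x', y) \<Rightarrow> x' = x \<longrightarrow> y \<in> - S}"
    by (simp add: entourage_def)
  from assms(2)[OF this] obtain y where "y \<in> S" "(x, y) \<in> {p. case p of (x', y) \<Rightarrow> x' = x \<longrightarrow> y \<in> - S}"
    by blast
  then show False by simp
qed

lemma hb_at: assumes "hb_converges I leq Z Y" "directed_set I leq" "entourage V"
  obtains i where "i \<in> I" "Z i \<subseteq> rel_image V Y" "Y \<subseteq> rel_image V (Z i)"
proof -
  obtain i0 where i0: "i0 \<in> I" "\<forall>i\<in>I. leq i0 i \<longrightarrow> (Y, Z i) \<in> hb_entourage V"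
    using assms(1,3) unfolding hb_converges_def by blast
  have "leq i0 i0" using assms(2) i0(1) unfolding directed_set_def by blast
  then have "(Y, Z i0) \<in> hb_entourage V" using i0 by blast
  then have "Z i0 \<subseteq> rel_image V Y" "Y \<subseteq> rel_image V (Z i0)" unfolding hb_entourage_def by auto
  then show ?thesis using that i0(1) by blast
qed

lemma closed_under:
  fixes h :: "'a::uniform_space \<Rightarrow> 'a"
  assumes h: "uniformly_continuous_on UNIV h" and hZ: "\<forall>i\<in>I. h ` Z i \<subseteq> Z i"
    and conv: "hb_converges I leq Z Y" and dir: "directed_set I leq" and Yc: "closed Y"
  shows "h ` Y \<subseteq> Y"
proof
  fix x assume "x \<in> h ` Y"
  then obtain y where y: "y \<in> Y" "x = h y" by auto
  show "x \<in> Y" unfolding y(2)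
  proof (rule ent_closed[OF Yc])
    fix W :: "('a \<times> 'a) set" assume W: "entourage W"
    obtain D where D: "entourage D" "\<And>x y z. (x,y)\<in>D \<Longrightarrow> (y,z)\<in>D \<Longrightarrow> (x,z)\<in>W"
      using ent_trans[OF W] by blast
    obtain U where U: "entourage U" "\<And>x y. (x,y)\<in>U \<Longrightarrow> (h x, h y)\<in>D"
      using ent_ucU[OF h D(1)] by blast
    obtain i where i: "i \<in> I" "Z i \<subseteq> rel_image (U \<inter> D) Y" "Y \<subseteq> rel_image (U \<inter> D) (Z i)"
      using hb_at[OF conv dir ent_int[OF U(1) D(1)]] by blast
    obtain z where z: "z \<in> Z i" "(y, z) \<in> U \<inter> D" using i(3) y(1) unfolding rel_image_def by blast
    have "h z \<in> Z i" using hZ i(1) z(1) by blast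
    then obtain y' where y': "y' \<in> Y" "(h z, y') \<in> U \<inter> D" using i(2) unfolding rel_image_def by blast
    have "(h y, h z) \<in> D" using U(2) z(2) by blast
    then have "(h y, y') \<in> W" using D(2) y'(2) by blast
    then show "\<exists>y'\<in>Y. (h y, y') \<in> W" using y'(1) by blast
  qed
qed

theorem corollary4p2:
  fixes G :: "('g, 'b) monoid_scheme"
    and act :: "'g \<Rightarrow> 'a::uniform_space \<Rightarrow> 'a"
    and f :: "'a \<Rightarrow> 'a"
    and Y :: "'a set"
    and I :: "'i set" and leq :: "'i \<Rightarrow> 'i \<Rightarrow> bool" and Z :: "'i \<Rightarrow> 'a set"
  assumes action: "group_action G act"
    and act_uc: "\<forall>g\<in>carrier G. uniformly_continuous_on UNIV (act g)"
    and expansive: "expansive_action G act"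
    and f_uc: "uniformly_continuous_on UNIV f"
    and f_equiv: "\<forall>g\<in>carrier G. \<forall>x. f (act g x) = act g (f x)"
    and Y_closed: "closed Y" and fY_closed: "closed (f ` Y)"
    and f_emb: "uniform_embedding_on Y f"
    and directed: "directed_set I leq"
    and Z_inv: "\<forall>i\<in>I. invariant_set G act (Z i)"
    and Z_maps: "\<forall>i\<in>I. f ` Z i \<subseteq> Z i"
    and Z_surj: "\<forall>i\<in>I. surjunctive f (Z i)"
    and conv: "hb_converges I leq Z Y"
  shows "invariant_set G act Y \<and> f ` Y = Y"
proof -
  have inv: "invariant_set G act Y"
    unfolding invariant_set_def
  proof (intro ballI)
    fix g y assume g: "g \<in> carrier G" and y: "y \<in> Y"
    have "act g ` Y \<subseteq> Y"
      by (rule closed_under[OF _ _ conv directed Y_closed])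
        (use act_uc g Z_inv in \<open>auto simp: invariant_set_def\<close>)
    then show "act g y \<in> Y" using y by blast
  qed
  have sub: "f ` Y \<subseteq> Y" by (rule closed_under[OF f_uc Z_maps conv directed Y_closed])
  have inj: "inj_on f Y" and ucinv: "uniformly_continuous_on (f ` Y) (inv_into Y f)"
    using f_emb by (auto simp: uniform_embedding_on_def)
  obtain W0 where W0: "entourage W0"
    "\<And>x y. x \<noteq> y \<Longrightarrow> \<exists>g\<in>carrier G. (act g x, act g y) \<notin> W0"
    using expansive unfolding expansive_action_def by blast
  obtain C where C: "entourage C" "\<And>x y z. (x,y)\<in>C \<Longrightarrow> (y,z)\<in>C \<Longrightarrow> (x,z)\<in>W0"
    using ent_trans[OF W0(1)] by blast
  obtain C' where C': "entourage C'" "\<And>x y z. (x,y)\<in>C' \<Longrightarrow> (y,z)\<in>C' \<Longrightarrow> (x,z)\<in>C"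
    using ent_trans[OF C(1)] by blast
  obtain E2 where E2: "entourage E2"
    "\<And>x y. x\<in>f`Y \<Longrightarrow> y\<in>f`Y \<Longrightarrow> (x,y)\<in>E2 \<Longrightarrow> (inv_into Y f x, inv_into Y f y)\<in>C'"
    using ent_uc[OF ucinv C'(1)] by blast
  obtain E0 where E0: "entourage E0" "\<And>x y z. (x,y)\<in>E0 \<Longrightarrow> (y,z)\<in>E0 \<Longrightarrow> (x,z)\<in>E2"
    using ent_trans[OF E2(1)] by blast
  have Y_sub: "Y \<subseteq> f ` Y"
  proof
    fix y assume y: "y \<in> Y"
    show "y \<in> f ` Y"
    proof (rule ent_closed[OF fY_closed])
      fix W :: "('a \<times> 'a) set" assume W: "entourage W"
      obtain D where D: "entourage D" "\<And>x y z. (x,y)\<in>D \<Longrightarrow> (y,z)\<in>D \<Longrightarrow> (x,z)\<in>W"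
        using ent_trans[OF W] by blast
      define T where "T = D \<inter> E0 \<inter> converse E0"
      have T: "entourage T" unfolding T_def by (intro ent_int ent_sym D(1) E0(1))
      obtain U where U: "entourage U" "\<And>x y. (x,y)\<in>U \<Longrightarrow> (f x, f y)\<in>T"
        using ent_ucU[OF f_uc T] by blast
      define V where "V = D \<inter> U \<inter> C' \<inter> converse C"
      have V: "entourage V" unfolding V_def by (intro ent_int ent_sym D(1) U(1) C'(1) C(1))
      have Vm: "(a,b) \<in> D" "(a,b) \<in> U" "(a,b) \<in> C'" "(b,a) \<in> C" if "(a,b) \<in> V" for a b
        using that unfolding V_def by auto
      have Tm: "(a,b) \<in> D" "(a,b) \<in> E0" "(b,a) \<in> E0" if "(a,b) \<in> T" for a b
        using that unfolding T_def by auto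
      obtain i where i: "i \<in> I" "Z i \<subseteq> rel_image V Y" "Y \<subseteq> rel_image V (Z i)"
        using hb_at[OF conv directed V] by blast
      have surjZ: "f ` Z i = Z i"
      proof (rule ccontr)
        assume "f ` Z i \<noteq> Z i"
        then have "\<not> inj_on f (Z i)" using Z_surj i(1) by (auto simp: surjunctive_def)
        then obtain a b where ab: "a \<in> Z i" "b \<in> Z i" "a \<noteq> b" "f a = f b"
          unfolding inj_on_def by blast
        obtain g where g: "g \<in> carrier G" "(act g a, act g b) \<notin> W0" using W0(2)[OF ab(3)] by blast
        have ga: "act g a \<in> Z i" and gb: "act g b \<in> Z i"
          using Z_inv i(1) g(1) ab(1,2) by (auto simp: invariant_set_def)
        have feq: "f (act g a) = f (act g b)" using f_equiv g(1) ab(4) by simp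
        obtain y1 where y1: "y1 \<in> Y" "(act g a, y1) \<in> V" using ga i(2) unfolding rel_image_def by blast
        obtain y2 where y2: "y2 \<in> Y" "(act g b, y2) \<in> V" using gb i(2) unfolding rel_image_def by blast
        have t1: "(f (act g a), f y1) \<in> T" by (rule U(2)[OF Vm(2)[OF y1(2)]])
        have t2: "(f (act g b), f y2) \<in> T" by (rule U(2)[OF Vm(2)[OF y2(2)]])
        have "(f y1, f y2) \<in> E2"
          using E0(2)[OF Tm(3)[OF t1]] Tm(2)[OF t2] feq by simp
        then have "(inv_into Y f (f y1), inv_into Y f (f y2)) \<in> C'"
          using E2(2)[OF imageI[OF y1(1)] imageI[OF y2(1)]] by simp
        then have c12: "(y1, y2) \<in> C'" using inj y1(1) y2(1) by simp
        have "(act g a, y2) \<in> C" by (rule C'(2)[OF Vm(3)[OF y1(2)] c12])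
        moreover have "(y2, act g b) \<in> C" by (rule Vm(4)[OF y2(2)])
        ultimately have "(act g a, act g b) \<in> W0" using C(2) by blast
        then show False using g(2) by blast
      qed
      obtain z where z: "z \<in> Z i" "(y, z) \<in> V" using i(3) y unfolding rel_image_def by blast
      obtain z' where z': "z' \<in> Z i" "z = f z'" using z(1) surjZ by (metis imageE)
      obtain y' where y': "y' \<in> Y" "(z', y') \<in> V" using z'(1) i(2) unfolding rel_image_def by blast
      have "(f z', f y') \<in> D" by (rule Tm(1)[OF U(2)[OF Vm(2)[OF y'(2)]]])
      then have "(y, f y') \<in> W" using D(2)[OF Vm(1)[OF z(2)]] z'(2) by simp
      then show "\<exists>y'\<in>f ` Y. (y, y') \<in> W" using y'(1) by blast
    qed
  qed
  show ?thesis using inv sub Y_sub by blast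
qed

end
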